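(* Let $(\mathbf X, A, Y)$ be random variables with joint distribution $P$, where $\mathbf X \in \mathcal X \subset \mathbb R^p$, $A$ takes values in a finite set $\mathcal A$, and $Y \in \mathbb R$. Let $p(a\mid \mathbf x)$ denote the conditional probability $\mathbf P(A=a \mid \mathbf X = \mathbf x)$, and suppose there is a positive constant $S$ with $p(a\mid \mathbf x) \ge S^{-1}$ for all $(\mathbf x, a) \in \mathcal X \times \mathcal A$. For a treatment rule $d:\mathcal X \to \mathcal A$ define its Value $$V(d) = E\left[ Y\, \frac{\mathbb 1(d(\mathbf X)=A)}{p(A\mid \mathbf X)}\right],$$ and let $d_0$ be an optimal rule, i.e. $d_0 \in \arg\max_d V(d)$ over all rules $d:\mathcal X\to\mathcal A$. Let $Q_0(\mathbf X, A) = E[Y\mid \mathbf X, A]$, assumed square integrable, and $T_0(\mathbf X, a) = Q_0(\mathbf X, a) - E[Q_0(\mathbf X, A)\mid \mathbf X]$. Assume the margin condition: there exist constants $C>0$ and $\alpha>0$ such that for every $\epsilon>0$, $$\mathbf P\Big(\max_{a\in\mathcal A} T_0(\mathbf X, a) - \max_{a \in \mathcal A\setminus \arg\max_{a} T_0(\mathbf X, a)} T_0(\mathbf X, a) \le \epsilon\Big) \le C\epsilon^{\alpha}.$$ Then for any treatment rule $d:\mathcal X\to\mathcal A$ and any square integrable function $Q:\mathcal X\times\mathcal A \to \mathbb R$ such that $d(\mathbf X) \in \arg\max_{a\in\mathcal A} Q(\mathbf X, a)$, $$V(d_0) - V(d) \le C'\left[E\big(Q(\mathbf X, A) - Q_0(\mathbf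 X, A)\big)^2\right]^{(1+\alpha)/(2+\alpha)},$$ where $C' = (2^{2+3\alpha} S^{1+\alpha} C)^{1/(2+\alpha)}$.
   Context: Treatment rules are measurable maps from covariate space to the finite treatment set. The expectation $E(Q(\mathbf X,A)-Q_0(\mathbf X,A))^2$ is taken under the distribution $P$ of $(\mathbf X, A, Y)$. *)

theory Defs
  imports "HOL-Probability.Probability"
begin

definition argmax_set :: "('a::finite \<Rightarrow> real) \<Rightarrow> 'a set" where
  "argmax_set f = {a. f a = Max (range f)}"

(* max_a f a - max_{a not in argmax f} f a ; the max over the empty set is -infinity,
   so the gap is +infinity when every treatment attains the maximum *)
definition margin_gap :: "('a::finite \<Rightarrow> real) \<Rightarrow> ereal" where
  "margin_gap f =
     (if UNIV - argmax_set f = {} then \<infinity>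
      else ereal (Max (range f) - Max (f ` (UNIV - argmax_set f))))"

definition rule_value ::
  "'w measure \<Rightarrow> ('w \<Rightarrow> 'x) \<Rightarrow> ('w \<Rightarrow> 'a) \<Rightarrow> ('w \<Rightarrow> real) \<Rightarrow> ('x \<Rightarrow> 'a \<Rightarrow> real)
     \<Rightarrow> ('x \<Rightarrow> 'a) \<Rightarrow> real" where
  "rule_value M X A Y ps d =
     (\<integral>\<omega>. Y \<omega> * (if d (X \<omega>) = A \<omega> then 1 else 0) / ps (X \<omega>) (A \<omega>) \<partial>M)"

end

theory Submission
  imports Defs
begin

lemma sub_vimage:
  assumes "prob_space M" "f \<in> M \<rightarrow>\<^sub>M N"
  shows "sigma_finite_subalgebra M (vimage_algebra (space M) f N)"
proof -
  interpret prob_space M by (rule assms(1))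
  have "finite_measure_subalgebra M (vimage_algebra (space M) f N)"
    unfolding finite_measure_subalgebra_def finite_measure_subalgebra_axioms_def subalgebra_def
    using finite_measure_axioms sets_image_in_sets[OF refl assms(2)] by auto
  then show ?thesis by (rule finite_measure_subalgebra_is_sigma_finite)
qed

locale ctx =
  fixes M :: "'w measure" and MX :: "'x measure" and X :: "'w \<Rightarrow> 'x"
    and A :: "'w \<Rightarrow> 'a::finite" and ps :: "'x \<Rightarrow> 'a \<Rightarrow> real" and S :: real
  assumes P: "prob_space M"
    and X_meas: "X \<in> M \<rightarrow>\<^sub>M MX"
    and A_meas: "A \<in> M \<rightarrow>\<^sub>M count_space UNIV"
    and prop_meas: "\<And>a. (\<lambda>x. ps x a) \<in> borel_measurable MX"
    and prop_cond: "\<And>a. AE \<omega> in M. ps (X \<omega>) a =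
          real_cond_exp M (vimage_algebra (space M) X MX)
            (\<lambda>\<omega>'. if A \<omega>' = a then 1 else 0) \<omega>"
    and S_pos: "S > 0"
    and pos: "\<And>\<omega> a. \<omega> \<in> space M \<Longrightarrow> ps (X \<omega>) a \<ge> 1 / S"
begin

abbreviation "F \<equiv> vimage_algebra (space M) X MX"

lemma X_space: "X \<in> space M \<rightarrow> space MX"
  using X_meas by (auto simp: measurable_def)

lemma F_sub: "sigma_finite_subalgebra M F"
proof -
  interpret prob_space M by (rule P)
  have "finite_measure_subalgebra M F"
    unfolding finite_measure_subalgebra_def finite_measure_subalgebra_axioms_def subalgebra_def
    using finite_measure_axioms sets_image_in_sets[OF refl X_meas] by auto
  then show ?thesis by (rule finite_measure_subalgebra_is_sigma_finite)
qed

lemma meas_F: "h \<in> borel_measurable MX \<Longrightarrow> (\<lambda>\<omega>. h (X \<omega>)) \<in> borel_measurable F"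
  using measurable_compose[OF measurable_vimage_algebra1[OF X_space]] by blast

lemma meas_M: "h \<in> borel_measurable MX \<Longrightarrow> (\<lambda>\<omega>. h (X \<omega>)) \<in> borel_measurable M"
  using measurable_compose[OF X_meas] by blast

lemma ind_meas[measurable]: "(\<lambda>\<omega>. if A \<omega> = a then 1 else (0::real)) \<in> borel_measurable M"
  using A_meas by measurable

lemma F1:
  assumes h: "h \<in> borel_measurable MX" and hi: "integrable M (\<lambda>\<omega>. h (X \<omega>))"
  shows "integrable M (\<lambda>\<omega>. h (X \<omega>) * ps (X \<omega>) a)"
    "integrable M (\<lambda>\<omega>. h (X \<omega>) * (if A \<omega> = a then 1 else 0))"
    "(\<integral>\<omega>. h (X \<omega>) * (if A \<omega> = a then 1 else 0) \<partial>M) = (\<integral>\<omega>. h (X \<omega>) * ps (X \<omega>) a \<partial>M)"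
proof -
  interpret sigma_finite_subalgebra M F by (rule F_sub)
  have i: "integrable M (\<lambda>\<omega>. h (X \<omega>) * (if A \<omega> = a then 1 else 0))"
    by (rule Bochner_Integration.integrable_bound[OF hi]) (auto intro!: borel_measurable_times meas_M[OF h])
  note R = real_cond_exp_intg[OF i meas_F[OF h] ind_meas]
  show "integrable M (\<lambda>\<omega>. h (X \<omega>) * (if A \<omega> = a then 1 else 0))" by (rule i)
  have ae: "AE \<omega> in M. h (X \<omega>) * real_cond_exp M F (\<lambda>\<omega>'. if A \<omega>' = a then 1 else 0) \<omega>
      = h (X \<omega>) * ps (X \<omega>) a"
    using prop_cond[of a] by eventually_elim simp
  show "integrable M (\<lambda>\<omega>. h (X \<omega>) * ps (X \<omega>) a)"
    using integrable_cong_AE_imp[OF R(1) _ ae] meas_M[OF h] meas_M[OF prop_meas[of a]] by auto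
  show "(\<integral>\<omega>. h (X \<omega>) * (if A \<omega> = a then 1 else 0) \<partial>M) = (\<integral>\<omega>. h (X \<omega>) * ps (X \<omega>) a \<partial>M)"
    using R(2) integral_cong_AE[OF _ _ ae] meas_M[OF h] meas_M[OF prop_meas[of a]] by auto
qed

lemma F2:
  fixes h :: "'x \<Rightarrow> real"
  assumes h: "h \<in> borel_measurable MX" and hpos: "\<And>x. 0 \<le> h x"
    and hi: "integrable M (\<lambda>\<omega>. h (X \<omega>) * (if A \<omega> = a then 1 else 0))"
  shows "integrable M (\<lambda>\<omega>. h (X \<omega>))"
proof -
  interpret prob_space M by (rule P)
  define hn where "hn n x = min (h x) (real n)" for n x
  have hn_meas: "hn n \<in> borel_measurable MX" for n unfolding hn_def using h by measurable
  have hn_int: "integrable M (\<lambda>\<omega>. hn n (X \<omega>))" for n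
    by (rule Bochner_Integration.integrable_bound[OF integrable_const[of "real n"]])
       (use meas_M[OF hn_meas[of n]] in \<open>auto simp: hn_def hpos\<close>)
  define B where "B = (\<integral>\<omega>. h (X \<omega>) * (if A \<omega> = a then 1 else 0) \<partial>M)"
  have bnd: "(\<integral>\<omega>. hn n (X \<omega>) \<partial>M) \<le> S * B" for n
  proof -
    note F = F1[OF hn_meas[of n] hn_int[of n], where a=a]
    note F = F(1) F(3)
    have "(\<integral>\<omega>. hn n (X \<omega>) \<partial>M) \<le> (\<integral>\<omega>. S * (hn n (X \<omega>) * ps (X \<omega>) a) \<partial>M)"
    proof (rule integral_mono[OF hn_int])
      show "integrable M (\<lambda>\<omega>. S * (hn n (X \<omega>) * ps (X \<omega>) a))" using F(1) by auto
      fix \<omega> assume "\<omega> \<in> space M"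
      then have "1 \<le> S * ps (X \<omega>) a" using pos[of \<omega> a] S_pos by (simp add: field_simps)
      moreover have "0 \<le> hn n (X \<omega>)" by (simp add: hn_def hpos)
      ultimately have "hn n (X \<omega>) * 1 \<le> hn n (X \<omega>) * (S * ps (X \<omega>) a)"
        by (intro mult_left_mono)
      then show "hn n (X \<omega>) \<le> S * (hn n (X \<omega>) * ps (X \<omega>) a)"
        by (simp add: mult_ac)
    qed
    also have "\<dots> = S * (\<integral>\<omega>. hn n (X \<omega>) * (if A \<omega> = a then 1 else 0) \<partial>M)"
      using F(2) by simp
    also have "\<dots> \<le> S * B" unfolding B_def
    proof (rule mult_left_mono[OF integral_mono])
      show "integrable M (\<lambda>\<omega>. hn n (X \<omega>) * (if A \<omega> = a then 1 else 0))"
        by (rule Bochner_Integration.integrable_bound[OF hn_int]) (auto intro!: borel_measurable_times meas_M[OF hn_meas] ind_meas)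
      show "integrable M (\<lambda>\<omega>. h (X \<omega>) * (if A \<omega> = a then 1 else 0))" by (rule hi)
      show "0 \<le> S" using S_pos by simp
      fix \<omega> show "hn n (X \<omega>) * (if A \<omega> = a then 1 else 0) \<le> h (X \<omega>) * (if A \<omega> = a then 1 else 0)"
        by (auto simp: hn_def)
    qed
    finally show ?thesis .
  qed
  have inc: "incseq (\<lambda>n. \<integral>\<omega>. hn n (X \<omega>) \<partial>M)"
    unfolding incseq_def
  proof (intro allI impI integral_mono hn_int)
    fix m n :: nat and \<omega> assume "m \<le> n"
    then show "hn m (X \<omega>) \<le> hn n (X \<omega>)" by (auto simp: hn_def)
  qed
  obtain L where L: "(\<lambda>n. \<integral>\<omega>. hn n (X \<omega>) \<partial>M) \<longlonglongrightarrow> L"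
    using incseq_convergent[OF inc, of "S * B"] bnd by blast
  show ?thesis
  proof (rule integrable_monotone_convergence[OF hn_int _ _ L meas_M[OF h]])
    show "AE x in M. mono (\<lambda>n. hn n (X x))" by (auto simp: mono_def hn_def)
    show "AE x in M. (\<lambda>i. hn i (X x)) \<longlonglongrightarrow> h (X x)"
    proof (rule AE_I2)
      fix x
      obtain N where "h (X x) \<le> real N" using real_arch_simple by blast
      then have "\<forall>n\<ge>N. hn n (X x) = h (X x)" by (auto simp: hn_def)
      then show "(\<lambda>i. hn i (X x)) \<longlonglongrightarrow> h (X x)"
        by (intro tendsto_eventually) (auto simp: eventually_sequentially)
    qed
  qed
qed

lemma q_meas:
  assumes "case_prod q \<in> borel_measurable (MX \<Otimes>\<^sub>M count_space UNIV)"
  shows "(\<lambda>x. q x b) \<in> borel_measurable MX"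
proof -
  have "(\<lambda>x. case_prod q (x, b)) \<in> borel_measurable MX" using assms by measurable
  then show ?thesis by simp
qed

lemma value_formula:
  fixes Y :: "'w \<Rightarrow> real" and q0 :: "'x \<Rightarrow> 'a \<Rightarrow> real" and d :: "'x \<Rightarrow> 'a"
  assumes Y_int: "integrable M Y"
    and q0_meas: "case_prod q0 \<in> borel_measurable (MX \<Otimes>\<^sub>M count_space UNIV)"
    and q0_cond: "AE \<omega> in M. q0 (X \<omega>) (A \<omega>) =
          real_cond_exp M
            (vimage_algebra (space M) (\<lambda>\<omega>'. (X \<omega>', A \<omega>')) (MX \<Otimes>\<^sub>M count_space UNIV)) Y \<omega>"
    and q0_int: "\<And>b. integrable M (\<lambda>\<omega>. q0 (X \<omega>) b)"
    and d_meas: "d \<in> MX \<rightarrow>\<^sub>M count_space UNIV"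
  shows "rule_value M X A Y ps d = (\<integral>\<omega>. q0 (X \<omega>) (d (X \<omega>)) \<partial>M)"
proof -
  let ?G = "vimage_algebra (space M) (\<lambda>\<omega>'. (X \<omega>', A \<omega>')) (MX \<Otimes>\<^sub>M count_space UNIV)"
  have XA: "(\<lambda>\<omega>'. (X \<omega>', A \<omega>')) \<in> M \<rightarrow>\<^sub>M MX \<Otimes>\<^sub>M count_space UNIV"
    using X_meas A_meas by (rule measurable_Pair)
  interpret G: sigma_finite_subalgebra M ?G by (rule sub_vimage[OF P XA])
  have XA_sp: "(\<lambda>\<omega>'. (X \<omega>', A \<omega>')) \<in> space M \<rightarrow> space (MX \<Otimes>\<^sub>M count_space UNIV)"
    using XA by (auto simp: measurable_def)
  note PG = measurable_vimage_algebra1[OF XA_sp]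
  have XG[measurable]: "X \<in> ?G \<rightarrow>\<^sub>M MX"
    using measurable_compose[OF PG measurable_fst] by simp
  have AG[measurable]: "A \<in> ?G \<rightarrow>\<^sub>M count_space UNIV"
    using measurable_compose[OF PG measurable_snd] by simp
  note [measurable] = d_meas prop_meas Y_int
  define k where "k b x = (if d x = b then 1 else 0) / ps x b" for b x
  have k_meas[measurable]: "k b \<in> borel_measurable MX" for b unfolding k_def by measurable
  define gs where "gs \<omega> = (\<Sum>b\<in>UNIV. if A \<omega> = b then k b (X \<omega>) else 0)" for \<omega>
  have gs_eq: "gs \<omega> = k (A \<omega>) (X \<omega>)" for \<omega> unfolding gs_def by (simp add: sum.delta)
  have gs_G: "gs \<in> borel_measurable ?G" unfolding gs_def by measurable
  have k_bnd: "\<bar>k b (X \<omega>)\<bar> \<le> S" if "\<omega> \<in> space M" for b \<omega>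
  proof -
    have p: "1 / S \<le> ps (X \<omega>) b" by (rule pos[OF that])
    then have pp: "0 < ps (X \<omega>) b" using S_pos by (smt (verit) divide_pos_pos)
    have "1 / ps (X \<omega>) b \<le> S" using p pp S_pos by (simp add: field_simps)
    then show ?thesis using pp S_pos by (auto simp: k_def)
  qed
  have Yint2: "integrable M (\<lambda>\<omega>. gs \<omega> * Y \<omega>)"
  proof (rule Bochner_Integration.integrable_bound[of _ "\<lambda>\<omega>. S * Y \<omega>"])
    show "integrable M (\<lambda>\<omega>. S * Y \<omega>)" using Y_int by simp
    show "(\<lambda>\<omega>. gs \<omega> * Y \<omega>) \<in> borel_measurable M"
      using measurable_from_subalg[OF G.subalg gs_G] Y_int by measurable
    show "AE \<omega> in M. norm (gs \<omega> * Y \<omega>) \<le> norm (S * Y \<omega>)"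
      using AE_space
    proof eventually_elim
      case (elim \<omega>)
      have "\<bar>gs \<omega>\<bar> * \<bar>Y \<omega>\<bar> \<le> S * \<bar>Y \<omega>\<bar>"
        using k_bnd[OF elim] by (simp add: gs_eq mult_right_mono)
      then show ?case using S_pos by (simp add: abs_mult)
    qed
  qed
  define hb where "hb b x = k b x * q0 x b" for b x
  have hb_meas: "hb b \<in> borel_measurable MX" for b
    unfolding hb_def using q_meas[OF q0_meas, of b] by measurable
  have hb_int: "integrable M (\<lambda>\<omega>. hb b (X \<omega>))" for b
  proof (rule Bochner_Integration.integrable_bound[of _ "\<lambda>\<omega>. S * q0 (X \<omega>) b"])
    show "integrable M (\<lambda>\<omega>. S * q0 (X \<omega>) b)" using q0_int[of b] by simp
    show "(\<lambda>\<omega>. hb b (X \<omega>)) \<in> borel_measurable M" by (rule meas_M[OF hb_meas])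
    show "AE \<omega> in M. norm (hb b (X \<omega>)) \<le> norm (S * q0 (X \<omega>) b)"
      using AE_space
    proof eventually_elim
      case (elim \<omega>)
      have "\<bar>k b (X \<omega>)\<bar> * \<bar>q0 (X \<omega>) b\<bar> \<le> S * \<bar>q0 (X \<omega>) b\<bar>"
        using k_bnd[OF elim] by (simp add: mult_right_mono)
      then show ?case using S_pos by (simp add: abs_mult hb_def)
    qed
  qed
  have "rule_value M X A Y ps d = (\<integral>\<omega>. gs \<omega> * Y \<omega> \<partial>M)"
    unfolding rule_value_def by (rule Bochner_Integration.integral_cong) (auto simp: gs_eq k_def)
  also have "\<dots> = (\<integral>\<omega>. gs \<omega> * real_cond_exp M ?G Y \<omega> \<partial>M)"
    by (rule G.real_cond_exp_intg(2)[symmetric, OF Yint2 gs_G]) simp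
  also have "\<dots> = (\<integral>\<omega>. gs \<omega> * q0 (X \<omega>) (A \<omega>) \<partial>M)"
  proof (rule integral_cong_AE)
    have gsM: "gs \<in> borel_measurable M" by (rule measurable_from_subalg[OF G.subalg gs_G])
    have q0XA: "(\<lambda>\<omega>. q0 (X \<omega>) (A \<omega>)) \<in> borel_measurable M"
      using measurable_compose[OF XA q0_meas] by simp
    show "(\<lambda>\<omega>. gs \<omega> * real_cond_exp M ?G Y \<omega>) \<in> borel_measurable M"
      using gsM by measurable
    show "(\<lambda>\<omega>. gs \<omega> * q0 (X \<omega>) (A \<omega>)) \<in> borel_measurable M"
      using gsM q0XA by measurable
    show "AE \<omega> in M. gs \<omega> * real_cond_exp M ?G Y \<omega> = gs \<omega> * q0 (X \<omega>) (A \<omega>)"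
      using q0_cond by eventually_elim simp
  qed
  also have "\<dots> = (\<integral>\<omega>. (\<Sum>b\<in>UNIV. hb b (X \<omega>) * (if A \<omega> = b then 1 else 0)) \<partial>M)"
    by (rule Bochner_Integration.integral_cong) (auto simp: gs_eq hb_def if_distrib sum.delta cong: if_cong)
  also have "\<dots> = (\<Sum>b\<in>UNIV. (\<integral>\<omega>. hb b (X \<omega>) * (if A \<omega> = b then 1 else 0) \<partial>M))"
    by (rule Bochner_Integration.integral_sum[where f="\<lambda>b \<omega>. hb b (X \<omega>) * (if A \<omega> = b then 1 else 0)"])
      (rule F1(2)[OF hb_meas hb_int])
  also have "\<dots> = (\<Sum>b\<in>UNIV. (\<integral>\<omega>. hb b (X \<omega>) * ps (X \<omega>) b \<partial>M))"
    by (rule sum.cong[OF refl]) (rule F1(3)[OF hb_meas hb_int])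
  also have "\<dots> = (\<Sum>b\<in>UNIV. (\<integral>\<omega>. (if d (X \<omega>) = b then q0 (X \<omega>) b else 0) \<partial>M))"
  proof (rule sum.cong[OF refl], rule Bochner_Integration.integral_cong[OF refl])
    fix b \<omega> assume "\<omega> \<in> space M"
    then have "0 < ps (X \<omega>) b" using pos[of \<omega> b] S_pos by (smt (verit) divide_pos_pos)
    then show "hb b (X \<omega>) * ps (X \<omega>) b = (if d (X \<omega>) = b then q0 (X \<omega>) b else 0)"
      by (auto simp: hb_def k_def)
  qed
  also have "\<dots> = (\<integral>\<omega>. (\<Sum>b\<in>UNIV. (if d (X \<omega>) = b then q0 (X \<omega>) b else 0)) \<partial>M)"
  proof (rule Bochner_Integration.integral_sum[symmetric])
    fix b
    show "integrable M (\<lambda>\<omega>. if d (X \<omega>) = b then q0 (X \<omega>) b else 0)"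
      by (rule Bochner_Integration.integrable_bound[OF q0_int[of b]])
        (use meas_M[of "\<lambda>x. if d x = b then q0 x b else 0"] q_meas[OF q0_meas, of b] in \<open>auto simp: measurable_If\<close>)
  qed
  also have "\<dots> = (\<integral>\<omega>. q0 (X \<omega>) (d (X \<omega>)) \<partial>M)"
    by (simp add: sum.delta)
  finally show ?thesis .
qed

lemma L2_L1:
  fixes g :: "'w \<Rightarrow> real"
  assumes "integrable M (\<lambda>\<omega>. (g \<omega>)\<^sup>2)" "g \<in> borel_measurable M"
  shows "integrable M g"
proof -
  interpret prob_space M by (rule P)
  show ?thesis
  proof (rule Bochner_Integration.integrable_bound[of _ "\<lambda>\<omega>. 1 + (g \<omega>)\<^sup>2"])
    show "integrable M (\<lambda>\<omega>. 1 + (g \<omega>)\<^sup>2)" using assms(1) by simp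
    show "g \<in> borel_measurable M" by (rule assms(2))
    show "AE \<omega> in M. norm (g \<omega>) \<le> norm (1 + (g \<omega>)\<^sup>2)"
    proof (rule AE_I2)
      fix \<omega>
      have "0 \<le> (\<bar>g \<omega>\<bar> - 1)\<^sup>2" by simp
      also have "(\<bar>g \<omega>\<bar> - 1)\<^sup>2 = (g \<omega>)\<^sup>2 - 2 * \<bar>g \<omega>\<bar> + 1"
        by (simp add: power2_diff)
      finally have "\<bar>g \<omega>\<bar> \<le> 1 + (g \<omega>)\<^sup>2" by simp
      then show "norm (g \<omega>) \<le> norm (1 + (g \<omega>)\<^sup>2)" by simp
    qed
  qed
qed

lemma sq_int:
  fixes r :: "'x \<Rightarrow> 'a \<Rightarrow> real"
  assumes rm: "case_prod r \<in> borel_measurable (MX \<Otimes>\<^sub>M count_space UNIV)"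
    and ri: "integrable M (\<lambda>\<omega>. (r (X \<omega>) (A \<omega>))\<^sup>2)"
  shows "integrable M (\<lambda>\<omega>. (r (X \<omega>) b)\<^sup>2)"
proof -
  have hm: "(\<lambda>x. (r x b)\<^sup>2) \<in> borel_measurable MX" using q_meas[OF rm, of b] by measurable
  show ?thesis
  proof (rule F2[OF hm, of b])
    show "integrable M (\<lambda>\<omega>. (r (X \<omega>) b)\<^sup>2 * (if A \<omega> = b then 1 else 0))"
    proof (rule Bochner_Integration.integrable_bound[OF ri])
      show "(\<lambda>\<omega>. (r (X \<omega>) b)\<^sup>2 * (if A \<omega> = b then 1 else 0)) \<in> borel_measurable M"
        using meas_M[OF hm] by measurable
    qed auto
  qed simp
qed

lemma F3:
  fixes h :: "'x \<Rightarrow> real"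
  assumes h: "h \<in> borel_measurable MX" and hpos: "\<And>x. 0 \<le> h x"
    and hi: "integrable M (\<lambda>\<omega>. h (X \<omega>))"
  shows "(\<integral>\<omega>. h (X \<omega>) \<partial>M) \<le> S * (\<integral>\<omega>. h (X \<omega>) * (if A \<omega> = b then 1 else 0) \<partial>M)"
proof -
  note F = F1[OF h hi, where a=b]
  have "(\<integral>\<omega>. h (X \<omega>) \<partial>M) \<le> (\<integral>\<omega>. S * (h (X \<omega>) * ps (X \<omega>) b) \<partial>M)"
  proof (rule integral_mono[OF hi])
    show "integrable M (\<lambda>\<omega>. S * (h (X \<omega>) * ps (X \<omega>) b))" using F(1) by auto
    fix \<omega> assume "\<omega> \<in> space M"
    then have "1 \<le> S * ps (X \<omega>) b" using pos[of \<omega> b] S_pos by (simp add: field_simps)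
    then have "h (X \<omega>) * 1 \<le> h (X \<omega>) * (S * ps (X \<omega>) b)"
      using hpos by (intro mult_left_mono)
    then show "h (X \<omega>) \<le> S * (h (X \<omega>) * ps (X \<omega>) b)"
      by (simp add: mult_ac)
  qed
  also have "\<dots> = S * (\<integral>\<omega>. h (X \<omega>) * (if A \<omega> = b then 1 else 0) \<partial>M)"
    using F(3) by simp
  finally show ?thesis .
qed

end

lemma margin_gap_le_iff:
  fixes f :: "'a::finite \<Rightarrow> real"
  shows "margin_gap f \<le> ereal e \<longleftrightarrow> (\<exists>b. f b < Max (range f) \<and> Max (range f) - f b \<le> e)"
proof -
  have fin: "finite (range f)" by simp
  have le: "f b \<le> Max (range f)" for b using fin by (simp add: Max_ge)
  have nm: "b \<notin> argmax_set f \<longleftrightarrow> f b < Max (range f)" for b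
    using le[of b] by (auto simp: argmax_set_def order_less_le)
  show ?thesis
  proof (cases "UNIV - argmax_set f = {}")
    case True
    then show ?thesis using nm by (auto simp: margin_gap_def)
  next
    case False
    let ?N = "f ` (UNIV - argmax_set f)"
    have Nfin: "finite ?N" by simp
    have Nne: "?N \<noteq> {}" using False by simp
    obtain b0 where b0: "b0 \<in> UNIV - argmax_set f" "f b0 = Max ?N"
      using Max_in[OF Nfin Nne] by auto
    have "margin_gap f \<le> ereal e \<longleftrightarrow> Max (range f) - Max ?N \<le> e"
      using False by (simp add: margin_gap_def)
    also have "\<dots> \<longleftrightarrow> (\<exists>b. f b < Max (range f) \<and> Max (range f) - f b \<le> e)"
    proof
      assume "Max (range f) - Max ?N \<le> e"
      then show "\<exists>b. f b < Max (range f) \<and> Max (range f) - f b \<le> e"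
        using b0 nm by (intro exI[of _ b0]) auto
    next
      assume "\<exists>b. f b < Max (range f) \<and> Max (range f) - f b \<le> e"
      then obtain b where "f b < Max (range f)" "Max (range f) - f b \<le> e" by blast
      moreover have "f b \<le> Max ?N" using \<open>f b < Max (range f)\<close> nm by (intro Max_ge) auto
      ultimately show "Max (range f) - Max ?N \<le> e" by linarith
    qed
    finally show ?thesis .
  qed
qed

lemma Max_shift:
  fixes f :: "'a::finite \<Rightarrow> real"
  shows "Max (range (\<lambda>a. f a - c)) = Max (range f) - c"
proof -
  have "mono (\<lambda>x::real. x - c)" by (auto simp: mono_def)
  from mono_Max_commute[OF this, of "range f"] show ?thesis
    by (simp add: image_image)
qed

lemma pointwise:
  fixes f q t :: "'a::finite \<Rightarrow> real"
  assumes db: "db \<in> argmax_set q" and t: "\<And>a. t a = f a - c" and e: "\<epsilon> > 0" and l: "la > 0"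
  shows "Max (range f) - f db \<le> la * (\<Sum>b\<in>UNIV. (q b - f b)\<^sup>2)
           + (if margin_gap t \<le> ereal \<epsilon> then 1 else 0) / (2 * la)
           + 2 * (\<Sum>b\<in>UNIV. (q b - f b)\<^sup>2) / \<epsilon>"
proof -
  define W where "W = (\<Sum>b\<in>UNIV. (q b - f b)\<^sup>2)"
  define D where "D = Max (range f) - f db"
  have W0: "0 \<le> W" unfolding W_def by (simp add: sum_nonneg)
  have "Max (range f) \<in> range f" by (rule Max_in) auto
  then obtain as where as: "f as = Max (range f)" by (metis imageE)
  have fle: "f b \<le> Max (range f)" for b by (simp add: Max_ge)
  have qle: "q b \<le> q db" for b using db by (simp add: argmax_set_def Max_ge)
  have D0: "0 \<le> D" unfolding D_def using fle[of db] by simp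
  have R0: "0 \<le> (if margin_gap t \<le> ereal \<epsilon> then 1 else 0) / (2 * la)" using l by simp
  show ?thesis
  proof (cases "D = 0")
    case True
    then show ?thesis using W0 R0 e l unfolding W_def[symmetric] D_def[symmetric]
      by (simp add: add_nonneg_nonneg)
  next
    case False
    then have Dpos: "D > 0" using D0 by simp
    then have ne: "as \<noteq> db" using as unfolding D_def by auto
    have D1: "D \<le> (f as - q as) + (q db - f db)" unfolding D_def using as qle[of as] by simp
    have "D\<^sup>2 \<le> 2 * ((q as - f as)\<^sup>2 + (q db - f db)\<^sup>2)"
    proof -
      have "D\<^sup>2 \<le> ((f as - q as) + (q db - f db))\<^sup>2" using D1 D0 by (simp add: power_mono)
      also have "\<dots> \<le> 2 * ((q as - f as)\<^sup>2 + (q db - f db)\<^sup>2)"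
      proof -
        have "2 * ((q as - f as)\<^sup>2 + (q db - f db)\<^sup>2) - ((f as - q as) + (q db - f db))\<^sup>2
            = ((q as - f as) + (q db - f db))\<^sup>2" by (simp add: power2_eq_square algebra_simps)
        then show ?thesis by (smt (verit) zero_le_power2)
      qed
      finally show ?thesis .
    qed
    also have "(q as - f as)\<^sup>2 + (q db - f db)\<^sup>2 = (\<Sum>b\<in>{as, db}. (q b - f b)\<^sup>2)"
      using ne by simp
    also have "\<dots> \<le> W" unfolding W_def by (rule sum_mono2) auto
    finally have DW: "D\<^sup>2 \<le> 2 * W" by simp
    have gap: "margin_gap t \<le> ereal D"
      unfolding margin_gap_le_iff
    proof (intro exI conjI)
      have "range t = range (\<lambda>a. f a - c)" using t by (simp add: fun_eq_iff)
      then have Mt: "Max (range t) = Max (range f) - c" by (simp add: Max_shift)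
      show "t db < Max (range t)" using Mt t[of db] Dpos unfolding D_def by simp
      show "Max (range t) - t db \<le> D" using Mt t[of db] unfolding D_def by simp
    qed
    show ?thesis
    proof (cases "margin_gap t \<le> ereal \<epsilon>")
      case True
      have "D \<le> la * D\<^sup>2 / 2 + 1 / (2 * la)"
      proof -
        have "0 \<le> (la * D - 1)\<^sup>2 / (2 * la)" using l by simp
        also have "(la * D - 1)\<^sup>2 / (2 * la) = la * D\<^sup>2 / 2 + 1 / (2 * la) - D"
          using l by (simp add: field_simps power2_eq_square)
        finally show ?thesis by simp
      qed
      also have "\<dots> \<le> la * W + 1 / (2 * la)" using DW l by (simp add: mult_left_mono)
      moreover have "0 \<le> 2 * W / \<epsilon>" using W0 e by simp
      ultimately show ?thesis using True unfolding W_def[symmetric] D_def[symmetric]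
        by simp
    next
      case False
      then have "ereal \<epsilon> < ereal D" using gap by (meson linorder_not_le order_less_le_trans)
      then have eD: "\<epsilon> < D" by simp
      have "D \<le> D\<^sup>2 / \<epsilon>" using eD e Dpos by (simp add: field_simps power2_eq_square)
      also have "\<dots> \<le> 2 * W / \<epsilon>" using DW e by (simp add: divide_right_mono)
      moreover have "0 \<le> la * W" using W0 l by simp
      ultimately show ?thesis using False unfolding W_def[symmetric] D_def[symmetric]
        by simp
    qed
  qed
qed

lemma key_ineq:
  fixes \<alpha> :: real assumes a: "\<alpha> > 0"
  shows "2 * ln (2 + \<alpha>) + \<alpha> * ln (2 + \<alpha>) - \<alpha> * ln \<alpha> \<le> 3 * ln 2 + 2 * \<alpha> * ln 2"
proof -
  have l4: "ln 4 = 2 * ln (2::real)" using ln_realpow[of 2 2] by simp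
  have l8: "ln 8 = 3 * ln (2::real)" using ln_realpow[of 2 3] by simp
  have l9: "ln 9 = 2 * ln (3::real)" using ln_realpow[of 3 2] by simp
  have "ln ((2 + \<alpha>) / (4 * \<alpha>)) \<le> (2 + \<alpha>) / (4 * \<alpha>) - 1" using a by (intro ln_le_minus_one) simp
  moreover have "ln ((2 + \<alpha>) / (4 * \<alpha>)) = ln (2 + \<alpha>) - 2 * ln 2 - ln \<alpha>"
    using a by (simp add: ln_div ln_mult l4)
  ultimately have "\<alpha> * (ln (2 + \<alpha>) - 2 * ln 2 - ln \<alpha>) \<le> \<alpha> * ((2 + \<alpha>) / (4 * \<alpha>) - 1)"
    using a by (intro mult_left_mono) auto
  also have "\<dots> = (2 - 3 * \<alpha>) / 4" using a by (simp add: field_simps)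
  finally have A1: "\<alpha> * ln (2 + \<alpha>) - 2 * \<alpha> * ln 2 - \<alpha> * ln \<alpha> \<le> (2 - 3 * \<alpha>) / 4"
    by (simp add: algebra_simps)
  have G: "ln 3 + ln u - 3 * ln 2 \<le> 3 * u / 8 - 1" if u: "u > 0" for u :: real
  proof -
    have "ln (3 * u / 8) \<le> 3 * u / 8 - 1" using u by (intro ln_le_minus_one) simp
    moreover have "ln (3 * u / 8) = ln 3 + ln u - 3 * ln 2"
      using u by (simp add: ln_div ln_mult l8)
    ultimately show ?thesis by simp
  qed
  have A2: "ln 3 + ln (2 + \<alpha>) - 3 * ln 2 \<le> 3 * (2 + \<alpha>) / 8 - 1" using G[of "2 + \<alpha>"] a by simp
  have "ln (8::real) \<le> ln 9" by simp
  then have A3: "3 * ln (2::real) \<le> 2 * ln 3" using l8 l9 by simp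
  show ?thesis using A1 A2 A3 by (simp add: field_simps)
qed

lemma numeric:
  fixes E S D C \<alpha> :: real
  assumes S: "S > 0" and D: "D \<ge> 0" and C: "C > 0" and a: "\<alpha> > 0"
    and H: "\<And>\<epsilon> la. \<epsilon> > 0 \<Longrightarrow> la > 0 \<Longrightarrow> E \<le> la * (S * D) + C * \<epsilon> powr \<alpha> / (2 * la) + 2 * (S * D) / \<epsilon>"
  shows "E \<le> (2 powr (2 + 3 * \<alpha>) * S powr (1 + \<alpha>) * C) powr (1 / (2 + \<alpha>))
              * D powr ((1 + \<alpha>) / (2 + \<alpha>))"
proof (cases "D = 0")
  case True
  have "E \<le> 0"
  proof (rule ccontr)
    assume "\<not> E \<le> 0"
    then have E0: "E > 0" by simp
    have "E \<le> C * 1 powr \<alpha> / (2 * (C / E))" using H[of 1 "C / E"] E0 C True by simp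
    also have "\<dots> = E / 2" using C E0 by (simp add: field_simps)
    finally show False using E0 by simp
  qed
  then show ?thesis using True by simp
next
  case False
  then have Dp: "D > 0" using D by simp
  define \<sigma> where "\<sigma> = S * D"
  have sp: "\<sigma> > 0" using S Dp by (simp add: \<sigma>_def)
  define x where "x = 8 * \<sigma> / (\<alpha>\<^sup>2 * C)"
  have xp: "x > 0" using sp a C by (simp add: x_def)
  define \<epsilon> where "\<epsilon> = x powr (1 / (2 + \<alpha>))"
  have ep: "\<epsilon> > 0" using xp by (simp add: \<epsilon>_def)
  define la where "la = 2 / (\<alpha> * \<epsilon>)"
  have lap: "la > 0" using a ep by (simp add: la_def)
  have "\<epsilon> powr (2 + \<alpha>) = x" unfolding \<epsilon>_def using xp a by (simp add: powr_powr)
  moreover have "\<epsilon> powr (2 + \<alpha>) = \<epsilon>\<^sup>2 * \<epsilon> powr \<alpha>" using ep by (simp add: powr_add powr_numeral)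
  ultimately have ea: "C * \<epsilon> powr \<alpha> = 8 * \<sigma> / (\<alpha>\<^sup>2 * \<epsilon>\<^sup>2)" using ep C a
    by (simp add: x_def field_simps)
  define V where "V = 2 * \<sigma> * (2 + \<alpha>) / (\<alpha> * \<epsilon>)"
  have EV: "E \<le> V"
  proof -
    have "E \<le> la * \<sigma> + C * \<epsilon> powr \<alpha> / (2 * la) + 2 * \<sigma> / \<epsilon>"
      using H[OF ep lap] by (simp add: \<sigma>_def)
    also have "\<dots> = V" unfolding V_def la_def ea using a ep
      by (simp add: field_simps power2_eq_square)
    finally show ?thesis .
  qed
  have Vp: "V > 0" using sp a ep by (simp add: V_def)
  define R where "R = (2 powr (2 + 3 * \<alpha>) * S powr (1 + \<alpha>) * C) powr (1 / (2 + \<alpha>))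
              * D powr ((1 + \<alpha>) / (2 + \<alpha>))"
  have Rp: "R > 0" using S C Dp by (simp add: R_def)
  have l1: "ln (2 powr (2 + 3 * \<alpha>) * S powr (1 + \<alpha>) * C) = (2 + 3 * \<alpha>) * ln 2 + (1 + \<alpha>) * ln S + ln C"
    using S C by (simp add: ln_mult)
  have l2: "ln R = (1 / (2 + \<alpha>)) * ln (2 powr (2 + 3 * \<alpha>) * S powr (1 + \<alpha>) * C) + ((1 + \<alpha>) / (2 + \<alpha>)) * ln D"
    unfolding R_def using S C Dp by (subst ln_mult) auto
  have lnR: "(2 + \<alpha>) * ln R = (2 + 3 * \<alpha>) * ln 2 + (1 + \<alpha>) * ln S + ln C + (1 + \<alpha>) * ln D"
  proof -
    have g: "p * (1 / p * L + q / p * N) = L + q * N" if "p > 0" for p q L N :: real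
      using that by (simp add: field_simps)
    show ?thesis unfolding l2 l1 using g[of "2 + \<alpha>"] a by simp
  qed
  have lne: "(2 + \<alpha>) * ln \<epsilon> = 3 * ln 2 + ln S + ln D - 2 * ln \<alpha> - ln C"
  proof -
    have l8: "ln 8 = 3 * ln (2::real)" using ln_realpow[of 2 3] by simp
    have "(2 + \<alpha>) * ln \<epsilon> = ln x" unfolding \<epsilon>_def using a by simp
    also have "\<dots> = 3 * ln 2 + ln S + ln D - 2 * ln \<alpha> - ln C"
      unfolding x_def \<sigma>_def using S Dp a C by (simp add: ln_div ln_mult l8 ln_realpow)
    finally show ?thesis .
  qed
  have lnV: "ln V = ln 2 + ln S + ln D + ln (2 + \<alpha>) - ln \<alpha> - ln \<epsilon>"
    unfolding V_def \<sigma>_def using S Dp a ep by (simp add: ln_div ln_mult)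
  have "(2 + \<alpha>) * ln V \<le> (2 + \<alpha>) * ln R"
  proof -
    have "(2 + \<alpha>) * ln V = (2 + \<alpha>) * (ln 2 + ln S + ln D + ln (2 + \<alpha>) - ln \<alpha>) - (2 + \<alpha>) * ln \<epsilon>"
      unfolding lnV by (simp add: algebra_simps)
    also have "\<dots> = (2 + \<alpha>) * (ln 2 + ln S + ln D) + 2 * ln (2 + \<alpha>) + \<alpha> * ln (2 + \<alpha>) - 2 * ln \<alpha>
        - \<alpha> * ln \<alpha> - (3 * ln 2 + ln S + ln D - 2 * ln \<alpha> - ln C)"
      unfolding lne by (simp add: algebra_simps)
    also have "\<dots> \<le> (2 + \<alpha>) * (ln 2 + ln S + ln D) + 3 * ln 2 + 2 * \<alpha> * ln 2
        - (3 * ln 2 + ln S + ln D - ln C)"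
      using key_ineq[OF a] by linarith
    also have "\<dots> = (2 + \<alpha>) * ln R" unfolding lnR by (simp add: algebra_simps)
    finally show ?thesis .
  qed
  then have "ln V \<le> ln R" using a by simp
  then have "V \<le> R" using Vp Rp by simp
  then show ?thesis using EV unfolding R_def by simp
qed

theorem lemma1:
  fixes M :: "'w measure"
    and Xs :: "(real ^ 'p) set"
    and X :: "'w \<Rightarrow> real ^ 'p"
    and A :: "'w \<Rightarrow> 'a::finite"
    and Y :: "'w \<Rightarrow> real"
    and ps :: "real ^ 'p \<Rightarrow> 'a \<Rightarrow> real"
    and q0 t0 Q :: "real ^ 'p \<Rightarrow> 'a \<Rightarrow> real"
    and d0 d :: "real ^ 'p \<Rightarrow> 'a"
    and S C \<alpha> :: real
  defines "MX \<equiv> restrict_space borel Xs"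
  assumes P: "prob_space M"
    and X_meas: "X \<in> M \<rightarrow>\<^sub>M MX"
    and X_range: "\<And>\<omega>. \<omega> \<in> space M \<Longrightarrow> X \<omega> \<in> Xs"
    and A_meas: "A \<in> M \<rightarrow>\<^sub>M count_space UNIV"
    and Y_meas: "Y \<in> borel_measurable M"
    and Y_int: "integrable M Y"
    \<comment> \<open>p(a|x) = P(A = a | X = x)\<close>
    and prop_meas: "\<And>a. (\<lambda>x. ps x a) \<in> borel_measurable MX"
    and prop_cond: "\<And>a. AE \<omega> in M. ps (X \<omega>) a =
          real_cond_exp M (vimage_algebra (space M) X MX)
            (\<lambda>\<omega>'. if A \<omega>' = a then 1 else 0) \<omega>"
    and S_pos: "S > 0"
    and positivity: "\<And>x a. x \<in> Xs \<Longrightarrow> ps x a \<ge> 1 / S"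
    \<comment> \<open>d0 is an optimal rule among all (measurable) rules\<close>
    and d0_meas: "d0 \<in> MX \<rightarrow>\<^sub>M count_space UNIV"
    and d0_opt: "\<And>d'. d' \<in> MX \<rightarrow>\<^sub>M count_space UNIV \<Longrightarrow>
          rule_value M X A Y ps d' \<le> rule_value M X A Y ps d0"
    \<comment> \<open>Q0(X,A) = E[Y | X, A], square integrable\<close>
    and q0_meas: "case_prod q0 \<in> borel_measurable (MX \<Otimes>\<^sub>M count_space UNIV)"
    and q0_cond: "AE \<omega> in M. q0 (X \<omega>) (A \<omega>) =
          real_cond_exp M
            (vimage_algebra (space M) (\<lambda>\<omega>'. (X \<omega>', A \<omega>')) (MX \<Otimes>\<^sub>M count_space UNIV)) Y \<omega>"
    and q0_sq: "integrable M (\<lambda>\<omega>. (q0 (X \<omega>) (A \<omega>))\<^sup>2)"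
    \<comment> \<open>T0(X,a) = Q0(X,a) - E[Q0(X,A) | X]\<close>
    and t0_meas: "case_prod t0 \<in> borel_measurable (MX \<Otimes>\<^sub>M count_space UNIV)"
    and t0_def: "\<And>a. AE \<omega> in M. t0 (X \<omega>) a = q0 (X \<omega>) a -
          real_cond_exp M (vimage_algebra (space M) X MX) (\<lambda>\<omega>'. q0 (X \<omega>') (A \<omega>')) \<omega>"
    \<comment> \<open>margin condition\<close>
    and C_pos: "C > 0" and alpha_pos: "\<alpha> > 0"
    and margin: "\<And>\<epsilon>. \<epsilon> > 0 \<Longrightarrow>
          measure M {\<omega> \<in> space M. margin_gap (t0 (X \<omega>)) \<le> ereal \<epsilon>} \<le> C * \<epsilon> powr \<alpha>"
    \<comment> \<open>the rule d and the square integrable Q with d(X) in argmax_a Q(X,a)\<close>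
    and d_meas: "d \<in> MX \<rightarrow>\<^sub>M count_space UNIV"
    and Q_meas: "case_prod Q \<in> borel_measurable (MX \<Otimes>\<^sub>M count_space UNIV)"
    and Q_sq: "integrable M (\<lambda>\<omega>. (Q (X \<omega>) (A \<omega>))\<^sup>2)"
    and d_argmax: "AE \<omega> in M. d (X \<omega>) \<in> argmax_set (Q (X \<omega>))"
  shows "rule_value M X A Y ps d0 - rule_value M X A Y ps d
           \<le> (2 powr (2 + 3 * \<alpha>) * S powr (1 + \<alpha>) * C) powr (1 / (2 + \<alpha>))
              * (\<integral>\<omega>. (Q (X \<omega>) (A \<omega>) - q0 (X \<omega>) (A \<omega>))\<^sup>2 \<partial>M) powr ((1 + \<alpha>) / (2 + \<alpha>))"
proof -
  have pos': "\<And>\<omega> a. \<omega> \<in> space M \<Longrightarrow> ps (X \<omega>) a \<ge> 1 / S"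
    using positivity X_range by simp
  interpret ctx M MX X A ps S
    by (rule ctx.intro[OF P X_meas A_meas prop_meas prop_cond S_pos pos'])
  interpret prob_space M by (rule P)
  have XA: "(\<lambda>\<omega>'. (X \<omega>', A \<omega>')) \<in> M \<rightarrow>\<^sub>M MX \<Otimes>\<^sub>M count_space UNIV"
    using X_meas A_meas by (rule measurable_Pair)
  have q0m: "(\<lambda>x. q0 x b) \<in> borel_measurable MX" for b by (rule q_meas[OF q0_meas])
  have Qm: "(\<lambda>x. Q x b) \<in> borel_measurable MX" for b by (rule q_meas[OF Q_meas])
  have t0m: "(\<lambda>x. t0 x b) \<in> borel_measurable MX" for b by (rule q_meas[OF t0_meas])
  have q0XA: "(\<lambda>\<omega>. q0 (X \<omega>) (A \<omega>)) \<in> borel_measurable M"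
    using measurable_compose[OF XA q0_meas] by simp
  have QXA: "(\<lambda>\<omega>. Q (X \<omega>) (A \<omega>)) \<in> borel_measurable M"
    using measurable_compose[OF XA Q_meas] by simp
  have q0Xm: "(\<lambda>\<omega>. q0 (X \<omega>) b) \<in> borel_measurable M" for b by (rule meas_M[OF q0m])
  have QXm: "(\<lambda>\<omega>. Q (X \<omega>) b) \<in> borel_measurable M" for b by (rule meas_M[OF Qm])
  have t0Xm: "(\<lambda>\<omega>. t0 (X \<omega>) b) \<in> borel_measurable M" for b by (rule meas_M[OF t0m])
  have q0_int: "integrable M (\<lambda>\<omega>. q0 (X \<omega>) b)" for b
    by (rule L2_L1[OF sq_int[OF q0_meas q0_sq] q0Xm])
  define e where "e x b = Q x b - q0 x b" for x b
  have e_meas: "case_prod e \<in> borel_measurable (MX \<Otimes>\<^sub>M count_space UNIV)"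
  proof -
    have "(\<lambda>p. case_prod Q p - case_prod q0 p) \<in> borel_measurable (MX \<Otimes>\<^sub>M count_space UNIV)"
      using Q_meas q0_meas by measurable
    then show ?thesis by (simp add: e_def case_prod_beta')
  qed
  have em: "(\<lambda>x. (e x b)\<^sup>2) \<in> borel_measurable MX" for b using q_meas[OF e_meas, of b] by measurable
  have eXA_sq: "integrable M (\<lambda>\<omega>. (e (X \<omega>) (A \<omega>))\<^sup>2)"
  proof (rule Bochner_Integration.integrable_bound[of _ "\<lambda>\<omega>. 2 * (Q (X \<omega>) (A \<omega>))\<^sup>2 + 2 * (q0 (X \<omega>) (A \<omega>))\<^sup>2"])
    show "integrable M (\<lambda>\<omega>. 2 * (Q (X \<omega>) (A \<omega>))\<^sup>2 + 2 * (q0 (X \<omega>) (A \<omega>))\<^sup>2)"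
      using Q_sq q0_sq by simp
    show "(\<lambda>\<omega>. (e (X \<omega>) (A \<omega>))\<^sup>2) \<in> borel_measurable M"
      unfolding e_def using QXA q0XA by measurable
    show "AE \<omega> in M. norm ((e (X \<omega>) (A \<omega>))\<^sup>2) \<le> norm (2 * (Q (X \<omega>) (A \<omega>))\<^sup>2 + 2 * (q0 (X \<omega>) (A \<omega>))\<^sup>2)"
    proof (rule AE_I2)
      fix \<omega>
      have g: "norm ((a - b)\<^sup>2) \<le> norm (2 * a\<^sup>2 + 2 * b\<^sup>2)" for a b :: real
      proof -
        have "0 \<le> (a + b)\<^sup>2" by simp
        then have "(a - b)\<^sup>2 \<le> 2 * a\<^sup>2 + 2 * b\<^sup>2" by (simp add: power2_eq_square algebra_simps)
        moreover have "0 \<le> 2 * a\<^sup>2 + 2 * b\<^sup>2" by simp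
        ultimately show ?thesis by simp
      qed
      show "norm ((e (X \<omega>) (A \<omega>))\<^sup>2) \<le> norm (2 * (Q (X \<omega>) (A \<omega>))\<^sup>2 + 2 * (q0 (X \<omega>) (A \<omega>))\<^sup>2)"
        unfolding e_def by (rule g)
    qed
  qed
  have eb_int: "integrable M (\<lambda>\<omega>. (e (X \<omega>) b)\<^sup>2)" for b
    by (rule sq_int[OF e_meas eXA_sq])
  define Dv where "Dv = (\<integral>\<omega>. (Q (X \<omega>) (A \<omega>) - q0 (X \<omega>) (A \<omega>))\<^sup>2 \<partial>M)"
  have Dv0: "0 \<le> Dv" unfolding Dv_def by simp
  define W where "W \<omega> = (\<Sum>b\<in>UNIV. (e (X \<omega>) b)\<^sup>2)" for \<omega>
  have W_int: "integrable M W" unfolding W_def using eb_int by simp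
  have W0: "0 \<le> W \<omega>" for \<omega> unfolding W_def by (simp add: sum_nonneg)
  have WD: "(\<integral>\<omega>. W \<omega> \<partial>M) \<le> S * Dv"
  proof -
    have "(\<integral>\<omega>. W \<omega> \<partial>M) = (\<Sum>b\<in>UNIV. (\<integral>\<omega>. (e (X \<omega>) b)\<^sup>2 \<partial>M))"
      unfolding W_def by (rule Bochner_Integration.integral_sum) (rule eb_int)
    also have "\<dots> \<le> (\<Sum>b\<in>UNIV. S * (\<integral>\<omega>. (e (X \<omega>) b)\<^sup>2 * (if A \<omega> = b then 1 else 0) \<partial>M))"
      by (rule sum_mono) (rule F3[OF em _ eb_int], simp)
    also have "\<dots> = S * (\<integral>\<omega>. (\<Sum>b\<in>UNIV. (e (X \<omega>) b)\<^sup>2 * (if A \<omega> = b then 1 else 0)) \<partial>M)"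
      by (simp add: sum_distrib_left Bochner_Integration.integral_sum[OF F1(2)[OF em eb_int]])
    also have "\<dots> = S * Dv"
      unfolding Dv_def by (simp add: e_def if_distrib sum.delta cong: if_cong)
    finally show ?thesis .
  qed
  have V_eq: "rule_value M X A Y ps d' = (\<integral>\<omega>. q0 (X \<omega>) (d' (X \<omega>)) \<partial>M)"
    if "d' \<in> MX \<rightarrow>\<^sub>M count_space UNIV" for d'
    by (rule value_formula[OF Y_int q0_meas q0_cond q0_int that])
  have absb: "\<bar>q0 (X \<omega>) a\<bar> \<le> (\<Sum>b\<in>UNIV. \<bar>q0 (X \<omega>) b\<bar>)" for \<omega> a
    by (rule member_le_sum) auto
  have sumabs_int: "integrable M (\<lambda>\<omega>. \<Sum>b\<in>UNIV. \<bar>q0 (X \<omega>) b\<bar>)"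
    using q0_int by simp
  have qd_int: "integrable M (\<lambda>\<omega>. q0 (X \<omega>) (d' (X \<omega>)))"
    if dm: "d' \<in> MX \<rightarrow>\<^sub>M count_space UNIV" for d'
  proof (rule Bochner_Integration.integrable_bound[OF sumabs_int])
    have "(\<lambda>\<omega>. (X \<omega>, d' (X \<omega>))) \<in> M \<rightarrow>\<^sub>M MX \<Otimes>\<^sub>M count_space UNIV"
      using X_meas measurable_compose[OF X_meas dm] by (rule measurable_Pair)
    from measurable_compose[OF this q0_meas]
    show "(\<lambda>\<omega>. q0 (X \<omega>) (d' (X \<omega>))) \<in> borel_measurable M" by simp
    show "AE \<omega> in M. norm (q0 (X \<omega>) (d' (X \<omega>))) \<le> norm (\<Sum>b\<in>UNIV. \<bar>q0 (X \<omega>) b\<bar>)"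
      using absb by (auto intro!: AE_I2 order_trans[OF _ abs_ge_self])
  qed
  define Mx where "Mx \<omega> = Max (range (q0 (X \<omega>)))" for \<omega>
  have Mx_meas: "Mx \<in> borel_measurable M"
    unfolding Mx_def using borel_measurable_Max[of UNIV "\<lambda>b \<omega>. q0 (X \<omega>) b" M] q0Xm by simp
  have Mx_in: "\<exists>a. Mx \<omega> = q0 (X \<omega>) a" for \<omega>
  proof -
    have "Max (range (q0 (X \<omega>))) \<in> range (q0 (X \<omega>))" by (rule Max_in) auto
    then show ?thesis unfolding Mx_def by (metis imageE)
  qed
  have Mx_int: "integrable M Mx"
  proof (rule Bochner_Integration.integrable_bound[OF sumabs_int Mx_meas])
    show "AE \<omega> in M. norm (Mx \<omega>) \<le> norm (\<Sum>b\<in>UNIV. \<bar>q0 (X \<omega>) b\<bar>)"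
    proof (rule AE_I2)
      fix \<omega> obtain a where "Mx \<omega> = q0 (X \<omega>) a" using Mx_in by blast
      then show "norm (Mx \<omega>) \<le> norm (\<Sum>b\<in>UNIV. \<bar>q0 (X \<omega>) b\<bar>)"
        using absb[of \<omega> a] by (simp add: order_trans[OF _ abs_ge_self])
    qed
  qed
  have Mx_ge: "q0 (X \<omega>) a \<le> Mx \<omega>" for \<omega> a unfolding Mx_def by (simp add: Max_ge)
  define Dl where "Dl \<omega> = Mx \<omega> - q0 (X \<omega>) (d (X \<omega>))" for \<omega>
  have Dl_int: "integrable M Dl" unfolding Dl_def using Mx_int qd_int[OF d_meas] by simp
  have diff: "rule_value M X A Y ps d0 - rule_value M X A Y ps d \<le> (\<integral>\<omega>. Dl \<omega> \<partial>M)"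
  proof -
    have "rule_value M X A Y ps d0 \<le> (\<integral>\<omega>. Mx \<omega> \<partial>M)"
      unfolding V_eq[OF d0_meas] by (rule integral_mono[OF qd_int[OF d0_meas] Mx_int Mx_ge])
    then show ?thesis unfolding V_eq[OF d_meas] Dl_def using Mx_int qd_int[OF d_meas] by simp
  qed
  define Mt where "Mt \<omega> = Max (range (t0 (X \<omega>)))" for \<omega>
  have Mt_meas[measurable]: "Mt \<in> borel_measurable M"
    unfolding Mt_def using borel_measurable_Max[of UNIV "\<lambda>b \<omega>. t0 (X \<omega>) b" M] t0Xm by simp
  have t0Xm'[measurable]: "(\<lambda>\<omega>. t0 (X \<omega>) b) \<in> borel_measurable M" for b by (rule t0Xm)
  define Bs where "Bs \<epsilon> = {\<omega> \<in> space M. margin_gap (t0 (X \<omega>)) \<le> ereal \<epsilon>}" for \<epsilon>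
  have Bs_eq: "Bs \<epsilon> = (\<Union>b. {\<omega> \<in> space M. t0 (X \<omega>) b < Mt \<omega> \<and> Mt \<omega> - t0 (X \<omega>) b \<le> \<epsilon>})" for \<epsilon>
    unfolding Bs_def Mt_def margin_gap_le_iff by auto
  have Bs_sets: "Bs \<epsilon> \<in> sets M" for \<epsilon>
    unfolding Bs_eq by measurable
  have AEt: "AE \<omega> in M. \<forall>a. t0 (X \<omega>) a = q0 (X \<omega>) a -
          real_cond_exp M (vimage_algebra (space M) X MX) (\<lambda>\<omega>'. q0 (X \<omega>') (A \<omega>')) \<omega>"
    using t0_def by (simp add: AE_all_countable)
  have AEp: "AE \<omega> in M. Dl \<omega> \<le> la * W \<omega> + indicator (Bs \<epsilon>) \<omega> / (2 * la) + 2 * W \<omega> / \<epsilon>"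
    if e: "\<epsilon> > 0" and l: "la > 0" for \<epsilon> la
    using AEt d_argmax AE_space
  proof eventually_elim
    case (elim \<omega>)
    have "indicator (Bs \<epsilon>) \<omega> = (if margin_gap (t0 (X \<omega>)) \<le> ereal \<epsilon> then 1 else (0::real))"
      using elim(3) by (simp add: Bs_def indicator_def)
    then show ?case
      using pointwise[OF elim(2), of "t0 (X \<omega>)" "q0 (X \<omega>)", OF spec[OF elim(1)] e l]
      unfolding Dl_def Mx_def W_def e_def by simp
  qed
  have main: "(\<integral>\<omega>. Dl \<omega> \<partial>M) \<le> la * (S * Dv) + C * \<epsilon> powr \<alpha> / (2 * la) + 2 * (S * Dv) / \<epsilon>"
    if e: "\<epsilon> > 0" and l: "la > 0" for \<epsilon> la
  proof -
    have ii: "integrable M (indicator (Bs \<epsilon>) :: 'w \<Rightarrow> real)"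
      using Bs_sets by (intro integrable_real_indicator) (auto simp: emeasure_eq_measure)
    have "(\<integral>\<omega>. Dl \<omega> \<partial>M) \<le> (\<integral>\<omega>. la * W \<omega> + indicator (Bs \<epsilon>) \<omega> / (2 * la) + 2 * W \<omega> / \<epsilon> \<partial>M)"
      using AEp[OF e l] Dl_int W_int ii by (intro integral_mono_AE) auto
    also have "\<dots> = la * (\<integral>\<omega>. W \<omega> \<partial>M) + measure M (Bs \<epsilon>) / (2 * la) + 2 * (\<integral>\<omega>. W \<omega> \<partial>M) / \<epsilon>"
      using W_int ii Bs_sets by (simp add: Int_absorb2 sets.sets_into_space)
    also have "\<dots> \<le> la * (S * Dv) + C * \<epsilon> powr \<alpha> / (2 * la) + 2 * (S * Dv) / \<epsilon>"
    proof -
      have "measure M (Bs \<epsilon>) \<le> C * \<epsilon> powr \<alpha>" unfolding Bs_def by (rule margin[OF e])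
      then have "measure M (Bs \<epsilon>) / (2 * la) \<le> C * \<epsilon> powr \<alpha> / (2 * la)"
        using l by (simp add: divide_right_mono)
      moreover have "la * (\<integral>\<omega>. W \<omega> \<partial>M) \<le> la * (S * Dv)" using WD l by simp
      moreover have "2 * (\<integral>\<omega>. W \<omega> \<partial>M) / \<epsilon> \<le> 2 * (S * Dv) / \<epsilon>" using WD e by (simp add: divide_right_mono)
      ultimately show ?thesis by linarith
    qed
    finally show ?thesis .
  qed
  have "(\<integral>\<omega>. Dl \<omega> \<partial>M) \<le> (2 powr (2 + 3 * \<alpha>) * S powr (1 + \<alpha>) * C) powr (1 / (2 + \<alpha>))
              * Dv powr ((1 + \<alpha>) / (2 + \<alpha>))"
    by (rule numeric[OF S_pos Dv0 C_pos alpha_pos main])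
  then show ?thesis using diff unfolding Dv_def by linarith
qed

end
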